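(* Fix a server $\mathrm{SP}_i$, a finite horizon $T$, a privacy budget $\varepsilon>0$ and a positive integer $T_s$ (the maximum number of sampling timestamps). Let $S=(D_{i,1},\dots,D_{i,T})$ be the finite stream of crowd-sourced databases held by $\mathrm{SP}_i$, and let $f$ be an aggregate function with sensitivity $\Delta f$ (with respect to adding/removing/changing one user's record in a single database $D_{i,t}$). The algorithm DPCrowd, run at $\mathrm{SP}_i$ as described in the context, satisfies user-level $\varepsilon$-differential privacy for the users registered at $\mathrm{SP}_i$ over the finite stream of length $T$: for every pair of streams $S,S'$ that differ only in the records of a single user (at any subset of the $T$ timestamps) and for every measurable set $O$ of possible output sequences, $$\Pr[\mathrm{DPCrowd}(S)\in O]\le e^{\varepsilon}\Pr[\mathrm{DPCrowd}(S')\in O].$$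
   Context: Setting: $m$ servers in a decentralized (time-varying) communication network; server $\mathrm{SP}_i$ holds at each timestamp $t$ a database $D_{i,t}$ with one row per user registered at $\mathrm{SP}_i$ at time $t$ (each row is a 0/1 vector over $d$ regions with at most one 1), and computes the aggregate $x_i(t)=f(D_{i,t})$ (e.g. the number of its users in a given region, for which $\Delta f=1$). The sensitivity is $\Delta f=\max\|f(D)-f(D')\|_1$ over databases $D,D'$ differing in one record. $\mathrm{Lap}(b)$ denotes the zero-mean Laplace distribution with density $\frac{1}{2b}e^{-|v|/b}$. Algorithm DPCrowd at $\mathrm{SP}_i$: for $t=1,\dots,T$, compute $x_i(t)=f(D_{i,t})$. If $t$ is a sampling point (the sampling decision is made by an adaptive rule that depends only on quantities the algorithm previously released/computed from noisy values) and fewer than $T_s$ sampling points have been used so far, then release $z_i(t)=x_i(t)+\upsilon_i(t)$ with fresh independent noise $\upsilon_i(t)\sim\mathrm{Lap}(\Delta f\cdot T_s/\varepsilon)$, increment the sample counter, and compute from $z_i(t)$, the previous estimates, and messages received from one-hop neighboring servers (Kalman-consensus information filter prediction/update, message broadcast, and sampling-rate adjustment) the released estimate $r_i(t)$. Otherwise set $z_i(t)=r_i(t-1)$, broadcast nothing, and compute $r_i(t)$ from previous estimates and neighbors' messages via the filter update. Thus the only step accessing the true aggregates $x_i(t)$ is the Laplace perturbation at at most $T_s$ sampling timestamps; all other computations (including the outputs, which are the released estimates and broadcast messages) are functions of the noisy values and of information (neighbors' messages) not depending on $\mathrm{SP}_i$'s stream. User-level DP means neighboring streams differ in all events of one user.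 *)

theory Defs
  imports "HOL-Probability.Probability"
begin

text \<open>A database held by a server maps each user to its record (None = user not
registered at that time).  A database has finitely many registered users.\<close>

type_synonym ('u, 'r) db = "'u \<Rightarrow> 'r option"

definition valid_db :: "('u, 'r) db \<Rightarrow> bool" where
  "valid_db D \<longleftrightarrow> finite {u. D u \<noteq> None}"

definition db_neighbors :: "('u, 'r) db \<Rightarrow> ('u, 'r) db \<Rightarrow> bool" where
  "db_neighbors D D' \<longleftrightarrow> valid_db D \<and> valid_db D' \<and>
     (\<exists>u. \<forall>v. v \<noteq> u \<longrightarrow> D v = D' v)"

definition sensitivity :: "(('u, 'r) db \<Rightarrow> real) \<Rightarrow> real" where
  "sensitivity f = Sup {\<bar>f D - f D'\<bar> | D D'. db_neighbors D D'}"

definition valid_stream :: "nat \<Rightarrow> (nat \<Rightarrow> ('u, 'r) db) \<Rightarrow> bool" where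
  "valid_stream T S \<longleftrightarrow> (\<forall>t\<in>{1..T}. valid_db (S t))"

definition user_neighbors ::
  "nat \<Rightarrow> (nat \<Rightarrow> ('u, 'r) db) \<Rightarrow> (nat \<Rightarrow> ('u, 'r) db) \<Rightarrow> bool" where
  "user_neighbors T S S' \<longleftrightarrow> valid_stream T S \<and> valid_stream T S' \<and>
     (\<exists>u. \<forall>t\<in>{1..T}. \<forall>v. v \<noteq> u \<longrightarrow> S t v = S' t v)"

definition laplace_density :: "real \<Rightarrow> real \<Rightarrow> real" where
  "laplace_density b v = exp (- \<bar>v\<bar> / b) / (2 * b)"

definition laplace :: "real \<Rightarrow> real measure" where
  "laplace b = density lborel (\<lambda>v. ennreal (laplace_density b v))"

text \<open>Fresh independent noise: one independent Laplace variable per timestamp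
1..T (the variable of timestamp t is used only if t is a sampling point, so this is
distributionally the same as drawing fresh noise at each sampling point).\<close>

definition noise_space :: "nat \<Rightarrow> real \<Rightarrow> (nat \<Rightarrow> real) measure" where
  "noise_space T b = PiM {1..T} (\<lambda>_. laplace b)"

text \<open>Abstract internal state 's (filter estimates, previous outputs, sampling
rate, ...).  Neighbours' messages do not depend on the server's stream and are
therefore fixed exogenous inputs; they are absorbed in the time-dependence of
the update functions.
  \<^item> samp t s: adaptive sampling rule at time t, from the current state;
  \<^item> upd_s t s z: prediction/update, broadcast, sampling-rate adjustment from the
    noisy value z = x(t) + noise;
  \<^item> upd_n t s: filter update when t is not used as a sampling point;
  \<^item> outp s: the released quantities (estimate r(t) and broadcast message).\<close>

fun dpcrowd_state ::
  "(nat \<Rightarrow> 's \<Rightarrow> bool) \<Rightarrow> (nat \<Rightarrow> 's \<Rightarrow> real \<Rightarrow> 's) \<Rightarrow> (nat \<Rightarrow> 's \<Rightarrow> 's) \<Rightarrow> 's \<Rightarrow>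
   nat \<Rightarrow> (('u, 'r) db \<Rightarrow> real) \<Rightarrow> (nat \<Rightarrow> ('u, 'r) db) \<Rightarrow> (nat \<Rightarrow> real) \<Rightarrow> nat \<Rightarrow> 's \<times> nat"
where
  "dpcrowd_state samp upd_s upd_n s0 Ts f S \<upsilon> 0 = (s0, 0)"
| "dpcrowd_state samp upd_s upd_n s0 Ts f S \<upsilon> (Suc t) =
     (let (s, c) = dpcrowd_state samp upd_s upd_n s0 Ts f S \<upsilon> t in
      if samp (Suc t) s \<and> c < Ts
      then (upd_s (Suc t) s (f (S (Suc t)) + \<upsilon> (Suc t)), Suc c)
      else (upd_n (Suc t) s, c))"

definition dpcrowd_output ::
  "(nat \<Rightarrow> 's \<Rightarrow> bool) \<Rightarrow> (nat \<Rightarrow> 's \<Rightarrow> real \<Rightarrow> 's) \<Rightarrow> (nat \<Rightarrow> 's \<Rightarrow> 's) \<Rightarrow> 's \<Rightarrow>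
   ('s \<Rightarrow> 'o) \<Rightarrow> nat \<Rightarrow> nat \<Rightarrow> (('u, 'r) db \<Rightarrow> real) \<Rightarrow> (nat \<Rightarrow> ('u, 'r) db) \<Rightarrow>
   (nat \<Rightarrow> real) \<Rightarrow> nat \<Rightarrow> 'o"
where
  "dpcrowd_output samp upd_s upd_n s0 outp T Ts f S \<upsilon> =
     (\<lambda>t\<in>{1..T}. outp (fst (dpcrowd_state samp upd_s upd_n s0 Ts f S \<upsilon> t)))"

definition dpcrowd_prob ::
  "(nat \<Rightarrow> 's \<Rightarrow> bool) \<Rightarrow> (nat \<Rightarrow> 's \<Rightarrow> real \<Rightarrow> 's) \<Rightarrow> (nat \<Rightarrow> 's \<Rightarrow> 's) \<Rightarrow> 's \<Rightarrow>
   ('s \<Rightarrow> 'o) \<Rightarrow> nat \<Rightarrow> nat \<Rightarrow> real \<Rightarrow> real \<Rightarrow> (('u, 'r) db \<Rightarrow> real) \<Rightarrow>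
   (nat \<Rightarrow> ('u, 'r) db) \<Rightarrow> (nat \<Rightarrow> 'o) set \<Rightarrow> real"
where
  "dpcrowd_prob samp upd_s upd_n s0 outp T Ts \<epsilon> \<Delta>f f S Ev =
     measure (noise_space T (\<Delta>f * real Ts / \<epsilon>))
       {\<upsilon> \<in> space (noise_space T (\<Delta>f * real Ts / \<epsilon>)).
          dpcrowd_output samp upd_s upd_n s0 outp T Ts f S \<upsilon> \<in> Ev}"

end

theory Submission
  imports Defs
begin


lemma laplace_prob:
  assumes b: "b > 0"
  shows "prob_space (laplace b)"
proof (rule prob_spaceI)
  define e where "e = exponential_density (1/b)"
  have e_nn: "\<And>v. 0 \<le> e v" unfolding e_def using b by (simp add: exponential_density_nonneg)
  have e_meas[measurable]: "e \<in> borel_measurable borel" unfolding e_def by simp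
  have e1: "(\<integral>\<^sup>+v. ennreal (e v) \<partial>lborel) = 1"
  proof -
    interpret prob_space "density lborel (\<lambda>v. ennreal (e v))"
      unfolding e_def using b by (intro prob_space_exponential_density) simp
    have "emeasure (density lborel (\<lambda>v. ennreal (e v))) UNIV = 1"
      using emeasure_space_1 by simp
    then show ?thesis by (simp add: emeasure_density)
  qed
  have e2: "(\<integral>\<^sup>+v. ennreal (e (-v)) \<partial>lborel) = 1"
    using nn_integral_real_affine[of "\<lambda>v. ennreal (e v)" "-1" 0] e1 by simp
  have "AE v in lborel. ennreal (laplace_density b v) = ennreal (e v / 2) + ennreal (e (-v) / 2)"
    using AE_lborel_singleton[of 0]
  proof eventually_elim
    case (elim v)
    then have "laplace_density b v = e v / 2 + e (-v) / 2"
      unfolding e_def exponential_density_def laplace_density_def using b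
      by (auto simp: field_simps abs_if)
    then show ?case using e_nn by (simp add: ennreal_plus[symmetric] del: ennreal_plus)
  qed
  then have "(\<integral>\<^sup>+v. ennreal (laplace_density b v) \<partial>lborel)
     = (\<integral>\<^sup>+v. ennreal (e v / 2) + ennreal (e (-v) / 2) \<partial>lborel)"
    by (rule nn_integral_cong_AE)
  also have "\<dots> = (\<integral>\<^sup>+v. ennreal (e v / 2) \<partial>lborel) + (\<integral>\<^sup>+v. ennreal (e (-v) / 2) \<partial>lborel)"
    by (rule nn_integral_add) auto
  also have "(\<integral>\<^sup>+v. ennreal (e v / 2) \<partial>lborel) = (\<integral>\<^sup>+v. ennreal (1/2) * ennreal (e v) \<partial>lborel)"
    by (rule nn_integral_cong) (subst ennreal_mult[symmetric], auto simp: e_nn)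
  also have "\<dots> = ennreal (1/2) * (\<integral>\<^sup>+v. ennreal (e v) \<partial>lborel)"
    by (rule nn_integral_cmult) simp
  also have "(\<integral>\<^sup>+v. ennreal (e (-v) / 2) \<partial>lborel) = (\<integral>\<^sup>+v. ennreal (1/2) * ennreal (e (-v)) \<partial>lborel)"
    by (rule nn_integral_cong) (subst ennreal_mult[symmetric], auto simp: e_nn)
  also have "\<dots> = ennreal (1/2) * (\<integral>\<^sup>+v. ennreal (e (-v)) \<partial>lborel)"
    by (rule nn_integral_cmult) simp
  finally have "(\<integral>\<^sup>+v. ennreal (laplace_density b v) \<partial>lborel) = 1"
    if h2: "ennreal (1/2) + ennreal (1/2) = 1"
    using e1 e2 h2 by simp
  moreover have "ennreal (1/2) + ennreal (1/2) = 1" by (subst ennreal_plus[symmetric]) auto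
  ultimately show "emeasure (laplace b) (space (laplace b)) = 1"
    unfolding laplace_def by (subst emeasure_density) (auto simp: laplace_density_def)
qed



interpretation lb: product_sigma_finite "\<lambda>_::nat. lborel :: real measure"
  by standard

lemma PiM_density_nn:
  fixes p :: "real \<Rightarrow> real" and I :: "nat set"
  assumes fin: "finite I"
    and p_meas[measurable]: "p \<in> borel_measurable borel"
    and p_nn: "\<And>v. 0 \<le> p v"
    and sf: "sigma_finite_measure (density lborel (\<lambda>v. ennreal (p v)))"
    and g[measurable]: "g \<in> borel_measurable (PiM I (\<lambda>_. lborel))"
  shows "(\<integral>\<^sup>+x. g x \<partial>PiM I (\<lambda>_. density lborel (\<lambda>v. ennreal (p v))))
       = (\<integral>\<^sup>+x. (\<Prod>i\<in>I. ennreal (p (x i))) * g x \<partial>PiM I (\<lambda>_. lborel))"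
  using fin g
proof (induction I arbitrary: g rule: finite_induct)
  case empty
  then show ?case
    by (simp add: PiM_empty)
next
  case (insert i I)
  interpret ld: product_sigma_finite "\<lambda>_::nat. density lborel (\<lambda>v. ennreal (p v))"
    using sf by (simp add: product_sigma_finite_def)
  have sets_eq: "\<And>J. sets (PiM J (\<lambda>_::nat. density lborel (\<lambda>v. ennreal (p v)))) = sets (PiM J (\<lambda>_. lborel))"
    by (intro sets_PiM_cong) auto
  have gi[measurable]: "g \<in> borel_measurable (PiM (insert i I) (\<lambda>_. lborel))" by fact
  have gd: "g \<in> borel_measurable (PiM (insert i I) (\<lambda>_. density lborel (\<lambda>v. ennreal (p v))))"
    using gi by (simp add: measurable_cong_sets[OF sets_eq refl])
  have "(\<integral>\<^sup>+x. g x \<partial>PiM (insert i I) (\<lambda>_. density lborel (\<lambda>v. ennreal (p v))))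
     = (\<integral>\<^sup>+x. (\<integral>\<^sup>+y. g (x(i:=y)) \<partial>density lborel (\<lambda>v. ennreal (p v))) \<partial>PiM I (\<lambda>_. density lborel (\<lambda>v. ennreal (p v))))"
    by (rule ld.product_nn_integral_insert[OF insert(1,2) gd])
  also have "\<dots> = (\<integral>\<^sup>+x. (\<integral>\<^sup>+y. ennreal (p y) * g (x(i:=y)) \<partial>lborel) \<partial>PiM I (\<lambda>_. density lborel (\<lambda>v. ennreal (p v))))"
    by (intro nn_integral_cong, subst nn_integral_density) (auto simp: space_PiM)
  also have "\<dots> = (\<integral>\<^sup>+x. (\<Prod>j\<in>I. ennreal (p (x j))) * (\<integral>\<^sup>+y. ennreal (p y) * g (x(i:=y)) \<partial>lborel) \<partial>PiM I (\<lambda>_. lborel))"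
    by (rule insert(3)) measurable
  also have "\<dots> = (\<integral>\<^sup>+x. (\<integral>\<^sup>+y. (\<Prod>j\<in>insert i I. ennreal (p ((x(i:=y)) j))) * g (x(i:=y)) \<partial>lborel) \<partial>PiM I (\<lambda>_. lborel))"
  proof (intro nn_integral_cong)
    fix x assume x: "x \<in> space (PiM I (\<lambda>_. lborel :: real measure))"
    have gx[measurable]: "(\<lambda>y. g (x(i:=y))) \<in> borel_measurable lborel"
      using measurable_comp[OF measurable_component_update[OF x insert(2)] gi] by (simp add: comp_def)
    have "(\<Prod>j\<in>I. ennreal (p (x j))) * (\<integral>\<^sup>+y. ennreal (p y) * g (x(i:=y)) \<partial>lborel)
        = (\<integral>\<^sup>+y. (\<Prod>j\<in>I. ennreal (p (x j))) * (ennreal (p y) * g (x(i:=y))) \<partial>lborel)"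
      by (rule nn_integral_cmult[symmetric]) simp
    also have "\<dots> = (\<integral>\<^sup>+y. (\<Prod>j\<in>insert i I. ennreal (p ((x(i:=y)) j))) * g (x(i:=y)) \<partial>lborel)"
    proof (intro nn_integral_cong)
      fix y
      have "(\<Prod>j\<in>insert i I. ennreal (p ((x(i:=y)) j))) = ennreal (p y) * (\<Prod>j\<in>I. ennreal (p ((x(i:=y)) j)))"
        using insert by simp
      also have "(\<Prod>j\<in>I. ennreal (p ((x(i:=y)) j))) = (\<Prod>j\<in>I. ennreal (p (x j)))"
        using insert by (intro prod.cong) auto
      finally show "(\<Prod>j\<in>I. ennreal (p (x j))) * (ennreal (p y) * g (x(i:=y))) = (\<Prod>j\<in>insert i I. ennreal (p ((x(i:=y)) j))) * g (x(i:=y))"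
        by (simp add: ac_simps)
    qed
    finally show "(\<Prod>j\<in>I. ennreal (p (x j))) * (\<integral>\<^sup>+y. ennreal (p y) * g (x(i:=y)) \<partial>lborel)
        = (\<integral>\<^sup>+y. (\<Prod>j\<in>insert i I. ennreal (p ((x(i:=y)) j))) * g (x(i:=y)) \<partial>lborel)" .
  qed
  also have "\<dots> = (\<integral>\<^sup>+x. (\<Prod>j\<in>insert i I. ennreal (p (x j))) * g x \<partial>PiM (insert i I) (\<lambda>_. lborel))"
    by (rule lb.product_nn_integral_insert[symmetric, OF insert(1,2)]) measurable
  finally show ?case .
qed

lemma shift_preserve:
  fixes d :: "nat \<Rightarrow> (nat \<Rightarrow> real) \<Rightarrow> real"
  assumes d[measurable]: "\<And>t. d t \<in> borel_measurable (PiM {1..<t} (\<lambda>_. lborel))"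
  shows "g \<in> borel_measurable (PiM {1..n} (\<lambda>_. lborel)) \<Longrightarrow>
    (\<integral>\<^sup>+x. g (\<lambda>t\<in>{1..n}. x t + d t (restrict x {1..<t})) \<partial>PiM {1..n} (\<lambda>_. lborel))
     = (\<integral>\<^sup>+x. g x \<partial>PiM {1..n} (\<lambda>_. lborel))"
proof (induction n arbitrary: g)
  case 0
  have e: "{1..0::nat} = {}" by simp
  show ?case unfolding e PiM_empty by (intro nn_integral_cong) auto
next
  case (Suc n)
  let ?P = "\<lambda>n. PiM {1..n} (\<lambda>_. lborel :: real measure)"
  define \<phi> where "\<phi> n x = (\<lambda>t\<in>{1..n}. x t + d t (restrict x {1..<t}))" for n x
  have phi_meas[measurable]: "\<phi> m \<in> ?P k \<rightarrow>\<^sub>M ?P m" if "m \<le> k" for m k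
    unfolding \<phi>_def
  proof (rule measurable_restrict)
    fix t assume t: "t \<in> {1..m}"
    have r: "(\<lambda>x. restrict x {1..<t}) \<in> ?P k \<rightarrow>\<^sub>M PiM {1..<t} (\<lambda>_. lborel)"
      using t that by (intro measurable_restrict_subset) auto
    have "(\<lambda>x. x t) \<in> ?P k \<rightarrow>\<^sub>M lborel"
      using t that by (intro measurable_component_singleton) auto
    moreover have "(\<lambda>x. d t (restrict x {1..<t})) \<in> ?P k \<rightarrow>\<^sub>M lborel"
      using measurable_comp[OF r d[of t]] by (simp add: comp_def)
    ultimately show "(\<lambda>x. x t + d t (restrict x {1..<t})) \<in> ?P k \<rightarrow>\<^sub>M lborel"
      by (simp add: measurable_lborel2)
  qed
  have ins: "{1..Suc n} = insert (Suc n) {1..n}" by auto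
  have nin: "Suc n \<notin> {1..n}" by simp
  have g[measurable]: "g \<in> borel_measurable (PiM (insert (Suc n) {1..n}) (\<lambda>_. lborel))"
    using Suc.prems unfolding ins .
  have gphi: "(\<lambda>x. g (\<phi> (Suc n) x)) \<in> borel_measurable (PiM (insert (Suc n) {1..n}) (\<lambda>_. lborel))"
    using measurable_comp[OF phi_meas[of "Suc n" "Suc n"] Suc.prems] unfolding comp_def ins by simp
  define G where "G w = (\<integral>\<^sup>+y. g (w(Suc n := y)) \<partial>lborel)" for w
  have G_meas: "G \<in> borel_measurable (?P n)"
    unfolding G_def by measurable
  have key: "\<phi> (Suc n) (x(Suc n := y)) = (\<phi> n x)(Suc n := y + d (Suc n) (restrict x {1..<Suc n}))"
    if x: "x \<in> space (?P n)" for x y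
  proof
    fix t
    show "\<phi> (Suc n) (x(Suc n := y)) t = ((\<phi> n x)(Suc n := y + d (Suc n) (restrict x {1..<Suc n}))) t"
    proof (cases "t \<in> {1..n}")
      case True
      have "restrict (x(Suc n := y)) {1..<t} = restrict x {1..<t}"
        using True by (auto simp: restrict_def)
      then show ?thesis using True unfolding \<phi>_def by auto
    next
      case False
      have "restrict (x(Suc n := y)) {1..<Suc n} = restrict x {1..<Suc n}"
        by (auto simp: restrict_def)
      then show ?thesis using False unfolding \<phi>_def by auto
    qed
  qed
  have "(\<integral>\<^sup>+x. g (\<phi> (Suc n) x) \<partial>?P (Suc n))
      = (\<integral>\<^sup>+x. (\<integral>\<^sup>+y. g (\<phi> (Suc n) (x(Suc n := y))) \<partial>lborel) \<partial>?P n)"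
    unfolding ins by (rule lb.product_nn_integral_insert[OF _ nin gphi]) simp
  also have "\<dots> = (\<integral>\<^sup>+x. G (\<phi> n x) \<partial>?P n)"
  proof (intro nn_integral_cong)
    fix x assume x: "x \<in> space (?P n)"
    define c where "c = d (Suc n) (restrict x {1..<Suc n})"
    have px: "\<phi> n x \<in> space (?P n)"
      using measurable_space[OF phi_meas[of n n] x] by simp
    have gx[measurable]: "(\<lambda>y. g ((\<phi> n x)(Suc n:=y))) \<in> borel_measurable borel"
      using measurable_comp[OF measurable_component_update[OF px nin] g] by (simp add: comp_def)
    have "(\<integral>\<^sup>+y. g (\<phi> (Suc n) (x(Suc n := y))) \<partial>lborel) = (\<integral>\<^sup>+y. g ((\<phi> n x)(Suc n := c + 1 * y)) \<partial>lborel)"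
      using key[OF x] by (simp add: c_def add.commute)
    also have "\<dots> = (\<integral>\<^sup>+y. g ((\<phi> n x)(Suc n := y)) \<partial>lborel)"
      using nn_integral_real_affine[OF gx, of 1 c] by simp
    finally show "(\<integral>\<^sup>+y. g (\<phi> (Suc n) (x(Suc n := y))) \<partial>lborel) = G (\<phi> n x)"
      unfolding G_def .
  qed
  also have "\<dots> = (\<integral>\<^sup>+x. G x \<partial>?P n)"
    using Suc.IH[OF G_meas] unfolding \<phi>_def .
  also have "\<dots> = (\<integral>\<^sup>+x. g x \<partial>?P (Suc n))"
    unfolding ins G_def by (rule lb.product_nn_integral_insert[OF _ nin g, symmetric]) simp
  finally show ?case unfolding \<phi>_def .
qed


lemma phi_meas_gen:
  fixes d :: "nat \<Rightarrow> (nat \<Rightarrow> real) \<Rightarrow> real"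
  assumes d: "\<And>t. d t \<in> borel_measurable (PiM {1..<t} (\<lambda>_. lborel))"
  shows "(\<lambda>x. \<lambda>t\<in>{1..n}. x t + d t (restrict x {1..<t})) \<in> PiM {1..n} (\<lambda>_. lborel) \<rightarrow>\<^sub>M PiM {1..n} (\<lambda>_. lborel)"
proof (rule measurable_restrict)
  fix t assume t: "t \<in> {1..n}"
  have r: "(\<lambda>x. restrict x {1..<t}) \<in> PiM {1..n} (\<lambda>_. lborel) \<rightarrow>\<^sub>M PiM {1..<t} (\<lambda>_. lborel :: real measure)"
    using t by (intro measurable_restrict_subset) auto
  have "(\<lambda>x. x t) \<in> PiM {1..n} (\<lambda>_. lborel) \<rightarrow>\<^sub>M (lborel :: real measure)"
    using t by (intro measurable_component_singleton) auto
  moreover have "(\<lambda>x. d t (restrict x {1..<t})) \<in> PiM {1..n} (\<lambda>_. lborel) \<rightarrow>\<^sub>M lborel"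
    using measurable_comp[OF r d[of t]] by (simp add: comp_def)
  ultimately show "(\<lambda>x. x t + d t (restrict x {1..<t})) \<in> PiM {1..n} (\<lambda>_. lborel) \<rightarrow>\<^sub>M lborel"
    by (simp add: measurable_lborel2)
qed

lemma lap_shift:
  assumes b: "b > 0"
  shows "laplace_density b v \<le> exp (\<bar>d\<bar> / b) * laplace_density b (v + d)"
proof -
  have "- \<bar>v\<bar> \<le> \<bar>d\<bar> + - \<bar>v + d\<bar>" by linarith
  then have "- \<bar>v\<bar> / b \<le> (\<bar>d\<bar> + - \<bar>v + d\<bar>) / b"
    using b by (intro divide_right_mono) auto
  then have "exp (- \<bar>v\<bar> / b) \<le> exp (\<bar>d\<bar> / b + - \<bar>v + d\<bar> / b)"
    by (simp add: diff_divide_distrib)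
  also have "\<dots> = exp (\<bar>d\<bar> / b) * exp (- \<bar>v + d\<bar> / b)" by (rule exp_add)
  finally have "exp (- \<bar>v\<bar> / b) / (2 * b) \<le> exp (\<bar>d\<bar> / b) * exp (- \<bar>v + d\<bar> / b) / (2 * b)"
    using b by (intro divide_right_mono) auto
  then show ?thesis unfolding laplace_density_def by simp
qed


context
  fixes samp :: "nat \<Rightarrow> 's \<Rightarrow> bool" and upd_s :: "nat \<Rightarrow> 's \<Rightarrow> real \<Rightarrow> 's"
    and upd_n :: "nat \<Rightarrow> 's \<Rightarrow> 's" and s0 :: 's and Ts :: nat
    and f :: "('u, 'r) db \<Rightarrow> real"
begin

abbreviation "st \<equiv> dpcrowd_state samp upd_s upd_n s0 Ts f"

lemma state_local:
  "(\<And>j. j \<in> {1..k} \<Longrightarrow> v j = v' j) \<Longrightarrow> st S v k = st S v' k"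
proof (induction k)
  case 0
  then show ?case by simp
next
  case (Suc k)
  have "st S v k = st S v' k" using Suc by auto
  moreover have "v (Suc k) = v' (Suc k)" using Suc by auto
  ultimately show ?case by (simp add: Let_def split: prod.splits)
qed

definition H :: "nat \<Rightarrow> real \<Rightarrow> ('s \<times> nat) \<times> real \<Rightarrow> 's \<times> nat" where
  "H t a x = (if samp t (fst (fst x)) \<and> snd (fst x) < Ts
              then (upd_s t (fst (fst x)) (a + snd x), Suc (snd (fst x)))
              else (upd_n t (fst (fst x)), snd (fst x)))"

lemma H_meas:
  fixes Ms :: "'s measure"
  assumes samp_meas: "\<And>t. {s \<in> space Ms. samp t s} \<in> sets Ms"
    and upd_s_meas: "\<And>t. (\<lambda>(s, z). upd_s t s z) \<in> Ms \<Otimes>\<^sub>M borel \<rightarrow>\<^sub>M Ms"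
    and upd_n_meas: "\<And>t. upd_n t \<in> Ms \<rightarrow>\<^sub>M Ms"
  shows "H t a \<in> (Ms \<Otimes>\<^sub>M count_space UNIV) \<Otimes>\<^sub>M borel \<rightarrow>\<^sub>M Ms \<Otimes>\<^sub>M count_space UNIV"
proof -
  have [measurable]: "Measurable.pred Ms (samp t)" unfolding Measurable.pred_def by (rule samp_meas)
  have us: "(\<lambda>x. upd_s t (fst x) (snd x)) \<in> Ms \<Otimes>\<^sub>M borel \<rightarrow>\<^sub>M Ms"
    using upd_s_meas[of t] by (simp add: case_prod_beta')
  let ?X = "(Ms \<Otimes>\<^sub>M count_space UNIV) \<Otimes>\<^sub>M (borel :: real measure)"
  have m1: "(\<lambda>x. fst (fst x)) \<in> ?X \<rightarrow>\<^sub>M Ms"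
    by (rule measurable_compose[OF measurable_fst measurable_fst])
  have m2: "(\<lambda>x. snd (fst x)) \<in> ?X \<rightarrow>\<^sub>M count_space UNIV"
    by (rule measurable_compose[OF measurable_fst measurable_snd])
  have m3: "(\<lambda>x. a + snd x) \<in> ?X \<rightarrow>\<^sub>M borel" by measurable
  have p1: "Measurable.pred ?X (\<lambda>x. samp t (fst (fst x)))"
    by (rule measurable_compose[OF m1]) fact
  have p2: "Measurable.pred ?X (\<lambda>x. snd (fst x) < Ts)"
    by (rule measurable_compose[OF m2]) simp
  have p: "{x \<in> space ?X. samp t (fst (fst x)) \<and> snd (fst x) < Ts} \<in> sets ?X"
    using pred_intros_logic(3)[OF p1 p2] unfolding Measurable.pred_def .
  have i1: "(\<lambda>x. upd_s t (fst (fst x)) (a + snd x)) \<in> ?X \<rightarrow>\<^sub>M Ms"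
    using measurable_compose[OF measurable_Pair[OF m1 m3] us] by simp
  have i2: "(\<lambda>x. Suc (snd (fst x))) \<in> ?X \<rightarrow>\<^sub>M count_space UNIV"
    by (rule measurable_compose[OF m2]) simp
  have e1: "(\<lambda>x. (upd_n t (fst (fst x)), snd (fst x))) \<in> ?X \<rightarrow>\<^sub>M Ms \<Otimes>\<^sub>M count_space UNIV"
    by (rule measurable_Pair[OF measurable_compose[OF m1 upd_n_meas] m2])
  show ?thesis unfolding H_def
    by (rule measurable_If[OF measurable_Pair[OF i1 i2] e1 p])
qed

lemma st_Suc: "st S v (Suc k) = H (Suc k) (f (S (Suc k))) (st S v k, v (Suc k))"
  by (simp add: H_def Let_def split: prod.splits)

lemma state_meas:
  fixes Ms :: "'s measure"
  assumes samp_meas: "\<And>t. {s \<in> space Ms. samp t s} \<in> sets Ms"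
    and upd_s_meas: "\<And>t. (\<lambda>(s, z). upd_s t s z) \<in> Ms \<Otimes>\<^sub>M borel \<rightarrow>\<^sub>M Ms"
    and upd_n_meas: "\<And>t. upd_n t \<in> Ms \<rightarrow>\<^sub>M Ms"
    and s0: "s0 \<in> space Ms"
  shows "{1..k} \<subseteq> K \<Longrightarrow> (\<lambda>v. st S v k) \<in> PiM K (\<lambda>_. lborel) \<rightarrow>\<^sub>M Ms \<Otimes>\<^sub>M count_space UNIV"
proof (induction k)
  case 0
  then show ?case using s0 by (simp add: space_pair_measure)
next
  case (Suc k)
  have IH: "(\<lambda>v. st S v k) \<in> PiM K (\<lambda>_. lborel) \<rightarrow>\<^sub>M Ms \<Otimes>\<^sub>M count_space UNIV"
  proof (rule Suc.IH)
    show "{1..k} \<subseteq> K" using Suc.prems by auto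
  qed
  have c: "(\<lambda>v. v (Suc k)) \<in> PiM K (\<lambda>_. lborel) \<rightarrow>\<^sub>M (borel :: real measure)"
    using Suc.prems by (intro measurable_component_singleton[where M="\<lambda>_. lborel", simplified]) auto
  have "(\<lambda>v. H (Suc k) (f (S (Suc k))) (st S v k, v (Suc k))) \<in> PiM K (\<lambda>_. lborel) \<rightarrow>\<^sub>M Ms \<Otimes>\<^sub>M count_space UNIV"
    by (rule measurable_compose[OF measurable_Pair[OF IH c] H_meas[OF samp_meas upd_s_meas upd_n_meas]])
  then show ?case by (simp only: st_Suc)
qed

definition dd :: "(nat \<Rightarrow> ('u, 'r) db) \<Rightarrow> (nat \<Rightarrow> ('u, 'r) db) \<Rightarrow> nat \<Rightarrow> (nat \<Rightarrow> real) \<Rightarrow> real" where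
  "dd S S' t v = (if samp t (fst (st S v (t - 1))) \<and> snd (st S v (t - 1)) < Ts then f (S t) - f (S' t) else 0)"

lemma dd_local: "dd S S' t (restrict v {1..<t}) = dd S S' t v"
proof -
  have "st S (restrict v {1..<t}) (t - 1) = st S v (t - 1)"
    by (rule state_local) auto
  then show ?thesis unfolding dd_def by simp
qed

lemma dd_meas:
  fixes Ms :: "'s measure"
  assumes samp_meas: "\<And>t. {s \<in> space Ms. samp t s} \<in> sets Ms"
    and upd_s_meas: "\<And>t. (\<lambda>(s, z). upd_s t s z) \<in> Ms \<Otimes>\<^sub>M borel \<rightarrow>\<^sub>M Ms"
    and upd_n_meas: "\<And>t. upd_n t \<in> Ms \<rightarrow>\<^sub>M Ms"
    and s0: "s0 \<in> space Ms"
  shows "dd S S' t \<in> borel_measurable (PiM {1..<t} (\<lambda>_. lborel))"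
proof -
  let ?Y = "Ms \<Otimes>\<^sub>M count_space (UNIV :: nat set)"
  have sm: "(\<lambda>v. st S v (t - 1)) \<in> PiM {1..<t} (\<lambda>_. lborel) \<rightarrow>\<^sub>M ?Y"
    by (rule state_meas[OF samp_meas upd_s_meas upd_n_meas s0]) auto
  have ps: "Measurable.pred Ms (samp t)" unfolding Measurable.pred_def by (rule samp_meas)
  have p1: "Measurable.pred ?Y (\<lambda>x. samp t (fst x))"
    by (rule measurable_compose[OF measurable_fst ps])
  have p2: "Measurable.pred ?Y (\<lambda>x. snd x < Ts)"
    by (rule measurable_compose[OF measurable_snd]) simp
  have p: "{x \<in> space ?Y. samp t (fst x) \<and> snd x < Ts} \<in> sets ?Y"
    using pred_intros_logic(3)[OF p1 p2] unfolding Measurable.pred_def .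
  have g: "(\<lambda>x. if samp t (fst x) \<and> snd x < Ts then f (S t) - f (S' t) else 0) \<in> borel_measurable ?Y"
    by (rule measurable_If[OF _ _ p]) simp_all
  show ?thesis
    using measurable_compose[OF sm g] unfolding dd_def .
qed

lemma coupling:
  assumes w: "\<And>t. t \<in> {1..T} \<Longrightarrow> w t = v t + dd S S' t v"
  shows "k \<le> T \<Longrightarrow> st S v k = st S' w k"
proof (induction k)
  case 0
  then show ?case by simp
next
  case (Suc k)
  then have IH: "st S v k = st S' w k" by simp
  have wk: "w (Suc k) = v (Suc k) + dd S S' (Suc k) v" using w Suc.prems by simp
  show ?case
    unfolding st_Suc IH H_def using wk IH by (simp add: dd_def ac_simps)
qed

lemma budget:
  assumes D: "\<And>t. t \<in> {1..T} \<Longrightarrow> \<bar>f (S t) - f (S' t)\<bar> \<le> Df"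
  shows "k \<le> T \<Longrightarrow> (\<Sum>t\<in>{1..k}. \<bar>dd S S' t v\<bar>) \<le> Df * real (snd (st S v k)) \<and> snd (st S v k) \<le> Ts"
proof (induction k)
  case 0
  then show ?case by simp
next
  case (Suc k)
  then have IH: "(\<Sum>t\<in>{1..k}. \<bar>dd S S' t v\<bar>) \<le> Df * real (snd (st S v k))" "snd (st S v k) \<le> Ts"
    by auto
  have Dk: "\<bar>f (S (Suc k)) - f (S' (Suc k))\<bar> \<le> Df" using D Suc.prems by simp
  have sum: "(\<Sum>t\<in>{1..Suc k}. \<bar>dd S S' t v\<bar>) = (\<Sum>t\<in>{1..k}. \<bar>dd S S' t v\<bar>) + \<bar>dd S S' (Suc k) v\<bar>"
    by simp
  show ?case
  proof (cases "samp (Suc k) (fst (st S v k)) \<and> snd (st S v k) < Ts")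
    case True
    then have "snd (st S v (Suc k)) = Suc (snd (st S v k))"
      unfolding st_Suc H_def by simp
    moreover have "\<bar>dd S S' (Suc k) v\<bar> \<le> Df" using True Dk by (simp add: dd_def)
    ultimately show ?thesis using IH True unfolding sum by (simp add: algebra_simps)
  next
    case False
    then have "snd (st S v (Suc k)) = snd (st S v k)"
      unfolding st_Suc H_def by simp
    moreover have "dd S S' (Suc k) v = 0" using False by (auto simp: dd_def)
    ultimately show ?thesis using IH unfolding sum by simp
  qed
qed


lemma budget_T:
  assumes D: "\<And>t. t \<in> {1..T} \<Longrightarrow> \<bar>f (S t) - f (S' t)\<bar> \<le> Df"
    and Df: "0 \<le> Df"
  shows "(\<Sum>t\<in>{1..T}. \<bar>dd S S' t v\<bar>) \<le> Df * real Ts"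
proof -
  have bb: "(\<Sum>t\<in>{1..T}. \<bar>dd S S' t v\<bar>) \<le> Df * real (snd (st S v T))" "snd (st S v T) \<le> Ts"
    using budget[OF D order.refl, where v=v] by auto
  have "Df * real (snd (st S v T)) \<le> Df * real Ts"
    using bb(2) Df by (intro mult_left_mono) auto
  then show ?thesis using bb(1) by linarith
qed

end

theorem theorem4:
  fixes T Ts :: nat and \<epsilon> \<Delta>f :: real
    and f :: "('u, 'r) db \<Rightarrow> real"
    and Ms :: "'s measure" and Mo :: "'o measure"
    and samp :: "nat \<Rightarrow> 's \<Rightarrow> bool" and upd_s :: "nat \<Rightarrow> 's \<Rightarrow> real \<Rightarrow> 's"
    and upd_n :: "nat \<Rightarrow> 's \<Rightarrow> 's" and s0 :: 's and outp :: "'s \<Rightarrow> 'o"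
    and S S' :: "nat \<Rightarrow> ('u, 'r) db" and Ev :: "(nat \<Rightarrow> 'o) set"
  assumes eps: "\<epsilon> > 0"
    and Ts: "Ts > 0"
    and sens_bdd: "bdd_above {\<bar>f D - f D'\<bar> | D D'. db_neighbors D D'}"
    and sens: "\<Delta>f = sensitivity f"
    and sens_pos: "\<Delta>f > 0"
    and s0: "s0 \<in> space Ms"
    and samp_meas: "\<And>t. {s \<in> space Ms. samp t s} \<in> sets Ms"
    and upd_s_meas: "\<And>t. (\<lambda>(s, z). upd_s t s z) \<in> Ms \<Otimes>\<^sub>M borel \<rightarrow>\<^sub>M Ms"
    and upd_n_meas: "\<And>t. upd_n t \<in> Ms \<rightarrow>\<^sub>M Ms"
    and outp_meas: "outp \<in> Ms \<rightarrow>\<^sub>M Mo"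
    and nb: "user_neighbors T S S'"
    and Ev: "Ev \<in> sets (PiM {1..T} (\<lambda>_. Mo))"
  shows "dpcrowd_prob samp upd_s upd_n s0 outp T Ts \<epsilon> \<Delta>f f S Ev
         \<le> exp \<epsilon> * dpcrowd_prob samp upd_s upd_n s0 outp T Ts \<epsilon> \<Delta>f f S' Ev"
  proof -
  define b where "b = \<Delta>f * real Ts / \<epsilon>"
  have b: "b > 0" unfolding b_def using eps Ts sens_pos by simp
  define p where "p = laplace_density b"
  have p_nn: "\<And>v. 0 \<le> p v" unfolding p_def laplace_density_def using b by simp
  have p_meas[measurable]: "p \<in> borel_measurable borel" unfolding p_def laplace_density_def by simp
  have lapP: "prob_space (laplace b)" by (rule laplace_prob[OF b])
  define N where "N = noise_space T b"
  have N_eq: "N = PiM {1..T} (\<lambda>_. density lborel (\<lambda>v. ennreal (p v)))"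
    by (simp add: N_def noise_space_def laplace_def p_def)
  interpret N: prob_space N unfolding N_def noise_space_def by (rule prob_space_PiM) (rule lapP)
  have sf: "sigma_finite_measure (density lborel (\<lambda>v. ennreal (p v)))"
  proof -
    interpret prob_space "density lborel (\<lambda>v. ennreal (p v))" using lapP by (simp add: laplace_def p_def)
    show ?thesis by unfold_locales
  qed
  let ?P = "PiM {1..T} (\<lambda>_. lborel :: real measure)"
  have sets_NP: "sets N = sets ?P" unfolding N_eq by (intro sets_PiM_cong) auto
  have space_NP: "space N = space ?P" by (rule sets_eq_imp_space_eq[OF sets_NP])
  have D: "\<And>t. t \<in> {1..T} \<Longrightarrow> \<bar>f (S t) - f (S' t)\<bar> \<le> \<Delta>f"
  proof -
    fix t assume t: "t \<in> {1..T}"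
    have "db_neighbors (S t) (S' t)"
      using nb t unfolding user_neighbors_def valid_stream_def db_neighbors_def by blast
    then have mem: "\<bar>f (S t) - f (S' t)\<bar> \<in> {\<bar>f D - f D'\<bar> | D D'. db_neighbors D D'}" by blast
    show "\<bar>f (S t) - f (S' t)\<bar> \<le> \<Delta>f"
      unfolding sens sensitivity_def by (rule cSup_upper[OF mem sens_bdd])
  qed
  define out where "out X v = dpcrowd_output samp upd_s upd_n s0 outp T Ts f X v" for X v
  have out_meas: "out X \<in> ?P \<rightarrow>\<^sub>M PiM {1..T} (\<lambda>_. Mo)" for X
    unfolding out_def dpcrowd_output_def
  proof (rule measurable_restrict)
    fix t assume t: "t \<in> {1..T}"
    have "(\<lambda>v. dpcrowd_state samp upd_s upd_n s0 Ts f X v t) \<in> ?P \<rightarrow>\<^sub>M Ms \<Otimes>\<^sub>M count_space UNIV"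
      by (rule state_meas[OF samp_meas upd_s_meas upd_n_meas s0]) (use t in auto)
    from measurable_compose[OF measurable_compose[OF this measurable_fst] outp_meas]
    show "(\<lambda>v. outp (fst (dpcrowd_state samp upd_s upd_n s0 Ts f X v t))) \<in> ?P \<rightarrow>\<^sub>M Mo" .
  qed
  define A where "A X = {v \<in> space N. out X v \<in> Ev}" for X
  have A_sets: "A X \<in> sets ?P" for X
  proof -
    have "A X = out X -` Ev \<inter> space ?P" unfolding A_def space_NP by auto
    then show ?thesis using measurable_sets[OF out_meas Ev] by simp
  qed
  have prob_eq: "dpcrowd_prob samp upd_s upd_n s0 outp T Ts \<epsilon> \<Delta>f f X Ev = measure N (A X)" for X
    by (simp add: dpcrowd_prob_def N_def b_def A_def out_def)
  have em: "emeasure N (A X) = (\<integral>\<^sup>+v. (\<Prod>t\<in>{1..T}. ennreal (p (v t))) * indicator (A X) v \<partial>?P)" for X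
  proof -
    have "emeasure N (A X) = (\<integral>\<^sup>+v. indicator (A X) v \<partial>N)"
      using A_sets sets_NP by simp
    also have "\<dots> = (\<integral>\<^sup>+v. (\<Prod>t\<in>{1..T}. ennreal (p (v t))) * indicator (A X) v \<partial>?P)"
      unfolding N_eq by (rule PiM_density_nn[OF _ p_meas p_nn sf]) (use A_sets in auto)
    finally show ?thesis .
  qed
  let ?d = "dd samp upd_s upd_n s0 Ts f S S'"
  have d_meas: "\<And>t. ?d t \<in> borel_measurable (PiM {1..<t} (\<lambda>_. lborel))"
    by (rule dd_meas[OF samp_meas upd_s_meas upd_n_meas s0])
  define \<phi> where "\<phi> v = (\<lambda>t\<in>{1..T}. v t + ?d t (restrict v {1..<t}))" for v
  have phi_meas: "\<phi> \<in> ?P \<rightarrow>\<^sub>M ?P"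
    unfolding \<phi>_def by (rule phi_meas_gen[OF d_meas])
  have phi_t: "\<phi> v t = v t + ?d t v" if "t \<in> {1..T}" for v t
  proof -
    have "?d t (restrict v {1..<t}) = ?d t v" by (rule dd_local)
    then show ?thesis using that unfolding \<phi>_def by simp
  qed
  have coup: "out S v = out S' (\<phi> v)" for v
  proof -
    have "dpcrowd_state samp upd_s upd_n s0 Ts f S v t = dpcrowd_state samp upd_s upd_n s0 Ts f S' (\<phi> v) t"
      if "t \<in> {1..T}" for t
      by (rule coupling[where T=T]) (use phi_t that in auto)
    then show ?thesis unfolding out_def dpcrowd_output_def by (intro restrict_ext) simp
  qed
  have ind_eq: "indicator (A S) v = (indicator (A S') (\<phi> v) :: ennreal)" if v: "v \<in> space ?P" for v
  proof -
    have "\<phi> v \<in> space ?P" using measurable_space[OF phi_meas v] .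
    then show ?thesis using v coup[of v] unfolding A_def space_NP by (simp split: split_indicator)
  qed
  have dens: "(\<Prod>t\<in>{1..T}. p (v t)) \<le> exp \<epsilon> * (\<Prod>t\<in>{1..T}. p (\<phi> v t))" for v
  proof -
    have "(\<Prod>t\<in>{1..T}. p (v t)) \<le> (\<Prod>t\<in>{1..T}. exp (\<bar>?d t v\<bar> / b) * p (\<phi> v t))"
    proof (rule prod_mono)
      fix t assume t: "t \<in> {1..T}"
      have "p (v t) \<le> exp (\<bar>?d t v\<bar> / b) * p (v t + ?d t v)"
        unfolding p_def by (rule lap_shift[OF b])
      then show "0 \<le> p (v t) \<and> p (v t) \<le> exp (\<bar>?d t v\<bar> / b) * p (\<phi> v t)"
        using p_nn phi_t[OF t] by simp
    qed
    also have "\<dots> = exp (\<Sum>t\<in>{1..T}. \<bar>?d t v\<bar> / b) * (\<Prod>t\<in>{1..T}. p (\<phi> v t))"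
      by (simp add: prod.distrib exp_sum)
    also have "\<dots> \<le> exp \<epsilon> * (\<Prod>t\<in>{1..T}. p (\<phi> v t))"
    proof (rule mult_right_mono)
      have "(\<Sum>t\<in>{1..T}. \<bar>?d t v\<bar>) \<le> \<Delta>f * real Ts"
        by (rule budget_T[OF D less_imp_le[OF sens_pos]])
      then have "(\<Sum>t\<in>{1..T}. \<bar>?d t v\<bar>) / b \<le> \<Delta>f * real Ts / b"
        using b by (intro divide_right_mono) auto
      also have "\<Delta>f * real Ts / b = \<epsilon>" unfolding b_def using eps Ts sens_pos by simp
      finally show "exp (\<Sum>t\<in>{1..T}. \<bar>?d t v\<bar> / b) \<le> exp \<epsilon>"
        by (simp add: sum_divide_distrib[symmetric])
      show "0 \<le> (\<Prod>t\<in>{1..T}. p (\<phi> v t))" by (intro prod_nonneg) (simp add: p_nn)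
    qed
    finally show ?thesis .
  qed
  define G where "G w = (\<Prod>t\<in>{1..T}. ennreal (p (w t))) * indicator (A S') w" for w
  have G_meas: "G \<in> borel_measurable ?P"
    unfolding G_def using A_sets by measurable
  have "emeasure N (A S) = (\<integral>\<^sup>+v. (\<Prod>t\<in>{1..T}. ennreal (p (v t))) * indicator (A S) v \<partial>?P)"
    by (rule em)
  also have "\<dots> \<le> (\<integral>\<^sup>+v. ennreal (exp \<epsilon>) * G (\<phi> v) \<partial>?P)"
  proof (rule nn_integral_mono)
    fix v assume v: "v \<in> space ?P"
    have "(\<Prod>t\<in>{1..T}. ennreal (p (v t))) = ennreal (\<Prod>t\<in>{1..T}. p (v t))"
      by (rule prod_ennreal) (simp add: p_nn)
    also have "\<dots> \<le> ennreal (exp \<epsilon> * (\<Prod>t\<in>{1..T}. p (\<phi> v t)))"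
      using dens[of v] by (rule ennreal_leI)
    also have "\<dots> = ennreal (exp \<epsilon>) * (\<Prod>t\<in>{1..T}. ennreal (p (\<phi> v t)))"
      by (simp add: ennreal_mult prod_nonneg p_nn prod_ennreal)
    finally have "(\<Prod>t\<in>{1..T}. ennreal (p (v t))) \<le> ennreal (exp \<epsilon>) * (\<Prod>t\<in>{1..T}. ennreal (p (\<phi> v t)))" .
    then show "(\<Prod>t\<in>{1..T}. ennreal (p (v t))) * indicator (A S) v \<le> ennreal (exp \<epsilon>) * G (\<phi> v)"
      unfolding G_def ind_eq[OF v] mult.assoc[symmetric] by (rule mult_right_mono) simp_all
  qed
  also have "\<dots> = ennreal (exp \<epsilon>) * (\<integral>\<^sup>+v. G (\<phi> v) \<partial>?P)"
    by (rule nn_integral_cmult) (rule measurable_compose[OF phi_meas G_meas])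
  also have "(\<integral>\<^sup>+v. G (\<phi> v) \<partial>?P) = (\<integral>\<^sup>+v. G v \<partial>?P)"
    unfolding \<phi>_def by (rule shift_preserve[OF d_meas G_meas])
  also have "\<dots> = emeasure N (A S')"
    unfolding G_def by (rule em[symmetric])
  finally have le: "emeasure N (A S) \<le> ennreal (exp \<epsilon>) * emeasure N (A S')" .
  have "measure N (A S) = enn2real (emeasure N (A S))" by (simp add: measure_def)
  also have "\<dots> \<le> enn2real (ennreal (exp \<epsilon>) * emeasure N (A S'))"
    by (rule enn2real_mono[OF le]) (unfold ennreal_mult_less_top, simp add: less_top[symmetric] N.emeasure_finite)
  also have "\<dots> = exp \<epsilon> * measure N (A S')"
    by (simp add: enn2real_mult measure_def)
  finally show ?thesis unfolding prob_eq .
qed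

end
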